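(* If $X$ is a closed permutation class with $\mathrm{al}(X)=\infty$, then $|X\cap S_n|\ge 2^{n-1}$ for every $n\in\mathbf{N}$.
   Context: $S_n$ is the set of permutations of $[n]$, $S=\bigcup_n S_n$. $\pi\prec\rho$ means $\rho$ (as a sequence) has a subsequence order-isomorphic to $\pi$ (i.e. with the same relative order of entries). A closed permutation class is a set $X\subset S$ closed downward under $\prec$. A permutation $\sigma$ is alternating if every value of $\sigma$ at an odd position is larger than every value of $\sigma$ at an even position, i.e. $\sigma(\{1,3,5,\dots\})>\sigma(\{2,4,6,\dots\})$. For $\pi\in S$, $\mathrm{al}(\pi)$ is the maximum length of an alternating permutation $\sigma$ with $\sigma\prec\pi$ or $\sigma\prec\pi^{-1}$, and for $X\subset S$, $\mathrm{al}(X)=\sup\{\mathrm{al}(\pi):\pi\in X\}$. *)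

theory Defs
  imports Main "HOL-Library.Extended_Nat"
begin

text \<open>A permutation of [n] is represented as the list of its values
  (one-line notation); we use the value set {0..<n} instead of {1..n},
  which does not affect order-isomorphism.  Position k (1-based) is list index k-1.\<close>

definition Sn :: "nat \<Rightarrow> nat list set" where
  "Sn n = {xs. length xs = n \<and> distinct xs \<and> set xs = {0..<n}}"

definition Sall :: "nat list set" where
  "Sall = (\<Union>n. Sn n)"

definition contained :: "nat list \<Rightarrow> nat list \<Rightarrow> bool" (infix "\<prec>" 50) where
  "p \<prec> r \<longleftrightarrow> (\<exists>f. (\<forall>i j. i < j \<and> j < length p \<longrightarrow> f i < f j)
      \<and> (\<forall>i < length p. f i < length r)
      \<and> (\<forall>i < length p. \<forall>j < length p. (p ! i < p ! j \<longleftrightarrow> r ! (f i) < r ! (f j))))"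

definition closed_class :: "nat list set \<Rightarrow> bool" where
  "closed_class X \<longleftrightarrow> X \<subseteq> Sall \<and> (\<forall>p r. r \<in> X \<and> p \<in> Sall \<and> p \<prec> r \<longrightarrow> p \<in> X)"

definition perm_inv :: "nat list \<Rightarrow> nat list" where
  "perm_inv xs = map (\<lambda>v. THE i. i < length xs \<and> xs ! i = v) [0..<length xs]"

text \<open>Alternating: values at odd (1-based) positions, i.e. even indices, exceed
  values at even (1-based) positions, i.e. odd indices.\<close>
definition alternating :: "nat list \<Rightarrow> bool" where
  "alternating s \<longleftrightarrow> s \<in> Sall \<and>
     (\<forall>i < length s. \<forall>j < length s. even i \<and> odd j \<longrightarrow> s ! j < s ! i)"

definition al :: "nat list \<Rightarrow> enat" where
  "al p = Sup {enat (length s) | s. alternating s \<and> (s \<prec> p \<or> s \<prec> perm_inv p)}"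

definition alX :: "nat list set \<Rightarrow> enat" where
  "alX X = Sup (al ` X)"

end

theory Submission
  imports Defs
begin

lemma Sall_iff: "p \<in> Sall \<longleftrightarrow> p \<in> Sn (length p)"
  unfolding Sall_def Sn_def by auto

lemma finite_Sn: "finite (Sn n)"
proof -
  have "Sn n \<subseteq> {xs. set xs \<subseteq> {0..<n} \<and> length xs = n}" unfolding Sn_def by auto
  moreover have "finite {xs. set xs \<subseteq> {0..<n} \<and> length xs = n}"
    by (rule finite_lists_length_eq) simp
  ultimately show ?thesis by (rule finite_subset)
qed

lemma distinct_set_range:
  assumes "distinct ys" "length ys = n" "set ys \<subseteq> {0..<n}"
  shows "set ys = {0..<n}"
proof -
  have "card (set ys) = n" using assms distinct_card by metis
  then show ?thesis using assms(3) by (simp add: card_subset_eq)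
qed

lemma contained_trans:
  assumes "p \<prec> q" "q \<prec> r" shows "p \<prec> r"
proof -
  obtain f where f: "\<forall>i j. i < j \<and> j < length p \<longrightarrow> f i < f j"
      "\<forall>i < length p. f i < length q"
      "\<forall>i < length p. \<forall>j < length p. (p ! i < p ! j \<longleftrightarrow> q ! (f i) < q ! (f j))"
    using assms(1) unfolding contained_def by blast
  obtain g where g: "\<forall>i j. i < j \<and> j < length q \<longrightarrow> g i < g j"
      "\<forall>i < length q. g i < length r"
      "\<forall>i < length q. \<forall>j < length q. (q ! i < q ! j \<longleftrightarrow> r ! (g i) < r ! (g j))"
    using assms(2) unfolding contained_def by blast
  show ?thesis unfolding contained_def
  proof (intro exI[of _ "g \<circ> f"] conjI allI impI)
    fix i j assume "i < j \<and> j < length p"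
    then show "(g \<circ> f) i < (g \<circ> f) j" using f g by auto
  next
    fix i assume "i < length p" then show "(g \<circ> f) i < length r" using f g by auto
  next
    fix i j assume "i < length p" "j < length p"
    then show "(p ! i < p ! j) = (r ! ((g \<circ> f) i) < r ! ((g \<circ> f) j))" using f g by auto
  qed
qed

definition std :: "nat list \<Rightarrow> nat list" where
  "std a = map (\<lambda>x. card {y \<in> set a. y < x}) a"

lemma std_less:
  assumes "distinct a" "i < length a" "j < length a"
  shows "(std a ! i < std a ! j) \<longleftrightarrow> (a ! i < a ! j)"
proof
  assume "a ! i < a ! j"
  have "{y \<in> set a. y < a ! i} \<subset> {y \<in> set a. y < a ! j}"
  proof (rule psubsetI)
    show "{y \<in> set a. y < a ! i} \<subseteq> {y \<in> set a. y < a ! j}"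
      using \<open>a ! i < a ! j\<close> by auto
    have "a ! i \<in> {y \<in> set a. y < a ! j}" using nth_mem[OF assms(2)] \<open>a ! i < a ! j\<close> by simp
    moreover have "a ! i \<notin> {y \<in> set a. y < a ! i}" by simp
    ultimately show "{y \<in> set a. y < a ! i} \<noteq> {y \<in> set a. y < a ! j}" by blast
  qed
  then have "card {y \<in> set a. y < a ! i} < card {y \<in> set a. y < a ! j}"
    by (intro psubset_card_mono) auto
  then show "std a ! i < std a ! j" using assms(2,3) unfolding std_def by simp
next
  assume h: "std a ! i < std a ! j"
  show "a ! i < a ! j"
  proof (rule ccontr)
    assume "\<not> a ! i < a ! j"
    then have "{y \<in> set a. y < a ! j} \<subseteq> {y \<in> set a. y < a ! i}" by auto
    then have "card {y \<in> set a. y < a ! j} \<le> card {y \<in> set a. y < a ! i}"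
      by (intro card_mono) auto
    then show False using h assms(2,3) unfolding std_def by simp
  qed
qed

lemma std_length[simp]: "length (std a) = length a"
  unfolding std_def by simp

lemma std_Sn:
  assumes "distinct a" shows "std a \<in> Sn (length a)"
proof -
  have d: "distinct (std a)"
    unfolding distinct_conv_nth
  proof (intro allI impI)
    fix i j assume ij: "i < length (std a)" "j < length (std a)" "i \<noteq> j"
    then have i: "i < length a" and j: "j < length a" by auto
    have ne: "a ! i \<noteq> a ! j" using nth_eq_iff_index_eq[OF assms i j] ij(3) by blast
    show "std a ! i \<noteq> std a ! j"
    proof (cases "a ! i < a ! j")
      case True then show ?thesis using std_less[OF assms i j] by auto
    next
      case False then have "a ! j < a ! i" using ne by auto
      then show ?thesis using std_less[OF assms j i] by auto
    qed
  qed
  have "set (std a) \<subseteq> {0..<length a}"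
  proof
    fix v assume "v \<in> set (std a)"
    then obtain x where x: "x \<in> set a" "v = card {y \<in> set a. y < x}" unfolding std_def by auto
    have "{y \<in> set a. y < x} \<subseteq> set a - {x}" by auto
    then have "v \<le> card (set a - {x})" unfolding x(2) by (intro card_mono) auto
    also have "\<dots> < card (set a)" by (rule card_Diff1_less) (simp_all add: x(1))
    also have "\<dots> = length a" using distinct_card[OF assms] .
    finally show "v \<in> {0..<length a}" by simp
  qed
  then have "set (std a) = {0..<length a}" using distinct_set_range[OF d] by simp
  then show ?thesis using d unfolding Sn_def by simp
qed

lemma std_contained:
  assumes "distinct s" "sorted_wrt (<) idx" "\<forall>x\<in>set idx. x < length s"
  shows "std (map ((!) s) idx) \<prec> s"
proof -
  have da: "distinct (map ((!) s) idx)"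
    using assms by (auto simp: distinct_map strict_sorted_iff inj_on_def nth_eq_iff_index_eq)
  show ?thesis unfolding contained_def
  proof (intro exI[of _ "(!) idx"] conjI allI impI)
    fix i j assume "i < j \<and> j < length (std (map ((!) s) idx))"
    then show "idx ! i < idx ! j" using assms(2) by (simp add: std_def sorted_wrt_iff_nth_less)
  next
    fix i assume "i < length (std (map ((!) s) idx))"
    then show "idx ! i < length s" using assms(3) by (simp add: std_def)
  next
    fix i j assume "i < length (std (map ((!) s) idx))" "j < length (std (map ((!) s) idx))"
    then show "(std (map ((!) s) idx) ! i < std (map ((!) s) idx) ! j) = (s ! (idx ! i) < s ! (idx ! j))"
      using std_less[OF da] by (simp add: std_def)
  qed
qed


lemma perm_inv_nth:
  assumes "xs \<in> Sn n" "v < n"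
  shows "perm_inv xs ! v < n \<and> xs ! (perm_inv xs ! v) = v"
proof -
  have len: "length xs = n" and d: "distinct xs" and st: "set xs = {0..<n}"
    using assms unfolding Sn_def by auto
  have ex: "\<exists>!i. i < length xs \<and> xs ! i = v"
  proof -
    have "v \<in> set xs" using st assms by auto
    then obtain i where i: "i < length xs" "xs ! i = v" by (auto simp: in_set_conv_nth)
    show ?thesis
    proof (rule ex1I[of _ i])
      show "i < length xs \<and> xs ! i = v" using i by simp
    next
      fix j assume "j < length xs \<and> xs ! j = v"
      then show "j = i" using nth_eq_iff_index_eq[OF d, of j i] i by simp
    qed
  qed
  define t where "t = (THE i. i < length xs \<and> xs ! i = v)"
  have t: "t < length xs \<and> xs ! t = v" unfolding t_def by (rule theI'[OF ex])
  have "perm_inv xs ! v = map (\<lambda>v. THE i. i < length xs \<and> xs ! i = v) [0..<length xs] ! v"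
    unfolding perm_inv_def by (rule refl)
  also have "\<dots> = t" unfolding t_def using assms(2) len by (simp only: nth_map length_upt nth_upt) simp
  finally show ?thesis using t len by simp
qed

lemma perm_inv_unique:
  assumes "xs \<in> Sn n" "j < n" "xs ! j = v"
  shows "perm_inv xs ! v = j"
proof -
  have len: "length xs = n" and d: "distinct xs" and st: "set xs = {0..<n}"
    using assms unfolding Sn_def by auto
  have "v < n" using assms st len nth_mem by fastforce
  then have "perm_inv xs ! v < n" "xs ! (perm_inv xs ! v) = v" using perm_inv_nth assms by auto
  then show ?thesis using assms len nth_eq_iff_index_eq[OF d, of "perm_inv xs ! v" j] by simp
qed

lemma perm_inv_Sn:
  assumes "xs \<in> Sn n" shows "perm_inv xs \<in> Sn n"
proof -
  have len: "length xs = n" using assms unfolding Sn_def by auto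
  have l: "length (perm_inv xs) = n" unfolding perm_inv_def using len by simp
  have d: "distinct (perm_inv xs)" unfolding distinct_conv_nth
  proof (intro allI impI)
    fix i j assume "i < length (perm_inv xs)" "j < length (perm_inv xs)" "i \<noteq> j"
    then have i: "i < n" and j: "j < n" using l by auto
    show "perm_inv xs ! i \<noteq> perm_inv xs ! j"
    proof
      assume "perm_inv xs ! i = perm_inv xs ! j"
      then have "xs ! (perm_inv xs ! i) = xs ! (perm_inv xs ! j)" by simp
      then show False using perm_inv_nth[OF assms i] perm_inv_nth[OF assms j] \<open>i \<noteq> j\<close> by simp
    qed
  qed
  have "set (perm_inv xs) \<subseteq> {0..<n}"
    using perm_inv_nth[OF assms] l by (auto simp: in_set_conv_nth)
  then show ?thesis using distinct_set_range[OF d l] d l unfolding Sn_def by simp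
qed

lemma perm_inv_perm_inv:
  assumes "xs \<in> Sn n" shows "perm_inv (perm_inv xs) = xs"
proof (rule nth_equalityI)
  have len: "length xs = n" using assms unfolding Sn_def by auto
  show "length (perm_inv (perm_inv xs)) = length xs" unfolding perm_inv_def by simp
  fix i assume "i < length (perm_inv (perm_inv xs))"
  then have i: "i < n" unfolding perm_inv_def using len by simp
  have "xs ! i \<in> set xs" using i len by simp
  then have xi: "xs ! i < n" using assms unfolding Sn_def by auto
  have "perm_inv xs ! (xs ! i) = i" using perm_inv_unique[OF assms i] by simp
  then show "perm_inv (perm_inv xs) ! i = xs ! i"
    using perm_inv_unique[OF perm_inv_Sn[OF assms] xi] by simp
qed

lemma perm_inv_inj: "inj_on perm_inv (Sn n)"
proof (rule inj_onI)
  fix x y assume a: "x \<in> Sn n" "y \<in> Sn n" "perm_inv x = perm_inv y"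
  have "x = perm_inv (perm_inv x)" using perm_inv_perm_inv[OF a(1)] by simp
  also have "\<dots> = perm_inv (perm_inv y)" using a(3) by simp
  also have "\<dots> = y" using perm_inv_perm_inv[OF a(2)] by simp
  finally show "x = y" .
qed

lemma contained_inv:
  assumes P: "p \<in> Sn k" and R: "r \<in> Sn m" and c: "p \<prec> r"
  shows "perm_inv p \<prec> perm_inv r"
proof -
  obtain f where f1: "\<forall>i j. i < j \<and> j < length p \<longrightarrow> f i < f j"
      and f2: "\<forall>i < length p. f i < length r"
      and f3: "\<forall>i < length p. \<forall>j < length p. (p ! i < p ! j \<longleftrightarrow> r ! (f i) < r ! (f j))"
    using c unfolding contained_def by blast
  have lp: "length p = k" using P unfolding Sn_def by auto
  have lr: "length r = m" "set r = {0..<m}" using R unfolding Sn_def by auto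
  have lpi: "length (perm_inv p) = k" unfolding perm_inv_def using lp by simp
  have fmono: "f a < f b \<longleftrightarrow> a < b" if "a < k" "b < k" for a b
  proof
    assume h: "f a < f b"
    show "a < b"
    proof (rule ccontr)
      assume "\<not> a < b"
      then have "b < a \<or> b = a" by auto
      then show False using f1[rule_format, of b a] h that lp by auto
    qed
  next
    assume "a < b" then show "f a < f b" using f1 that lp by auto
  qed
  define g where "g v = r ! (f (perm_inv p ! v))" for v
  have pinv: "perm_inv p ! v < k" "p ! (perm_inv p ! v) = v" if "v < k" for v
    using perm_inv_nth[OF P that] by auto
  have gr: "g v < m" if "v < k" for v
  proof -
    have "f (perm_inv p ! v) < m" using f2 pinv[OF that] lp lr by auto
    then have "r ! (f (perm_inv p ! v)) \<in> set r" using lr(1) by (intro nth_mem) simp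
    then show ?thesis unfolding g_def lr(2) by simp
  qed
  have rg: "perm_inv r ! g v = f (perm_inv p ! v)" if "v < k" for v
    unfolding g_def using perm_inv_unique[OF R] f2 pinv[OF that] lp lr by auto
  show ?thesis unfolding contained_def
  proof (intro exI[of _ g] conjI allI impI)
    fix u v assume a: "u < v \<and> v < length (perm_inv p)"
    then have "u < k" "v < k" using lpi by auto
    then have "p ! (perm_inv p ! u) < p ! (perm_inv p ! v)" using pinv a by simp
    then show "g u < g v" unfolding g_def
      using f3[rule_format, of "perm_inv p ! u" "perm_inv p ! v"] pinv \<open>u < k\<close> \<open>v < k\<close> lp by simp
  next
    fix v assume "v < length (perm_inv p)" then show "g v < length (perm_inv r)"
      using gr lpi lr by (simp add: perm_inv_def)
  next
    fix u v assume "u < length (perm_inv p)" "v < length (perm_inv p)"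
    then have "u < k" "v < k" using lpi by auto
    then show "(perm_inv p ! u < perm_inv p ! v) = (perm_inv r ! g u < perm_inv r ! g v)"
      using rg[of u] rg[of v] fmono[OF pinv(1)[of u] pinv(1)[of v]] by simp
  qed
qed


lemma patterns_G:
  assumes alt: "alternating s" and p0: "p0 < length s" "even p0"
    and pmin: "\<And>q. q < length s \<Longrightarrow> even q \<Longrightarrow> s ! p0 \<le> s ! q"
    and j0: "j0 < n"
    and idx_len: "\<And>S. S \<subseteq> {..<n-1} \<Longrightarrow> length (idx S) = n"
    and idx_sorted: "\<And>S. S \<subseteq> {..<n-1} \<Longrightarrow> sorted_wrt (<) (idx S)"
    and idx_bound: "\<And>S x. S \<subseteq> {..<n-1} \<Longrightarrow> x \<in> set (idx S) \<Longrightarrow> x < length s"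
    and idx_j0: "\<And>S. S \<subseteq> {..<n-1} \<Longrightarrow> idx S ! j0 = p0"
    and par: "\<And>S S'. S \<subseteq> {..<n-1} \<Longrightarrow> S' \<subseteq> {..<n-1} \<Longrightarrow>
                (\<forall>j<n. even (idx S ! j) \<longleftrightarrow> even (idx S' ! j)) \<Longrightarrow> S = S'"
  shows "2 ^ (n - 1) \<le> card {\<pi> \<in> Sn n. \<pi> \<prec> s}"
proof -
  have ds: "distinct s" using alt unfolding alternating_def Sall_iff Sn_def by auto
  have alt2: "\<And>i j. i < length s \<Longrightarrow> j < length s \<Longrightarrow> even i \<Longrightarrow> odd j \<Longrightarrow> s ! j < s ! i"
    using alt unfolding alternating_def by blast
  define \<Phi> where "\<Phi> S = std (map ((!) s) (idx S))" for S
  have bnd: "idx S ! j < length s" if "S \<subseteq> {..<n-1}" "j < n" for S j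
  proof -
    have "idx S ! j \<in> set (idx S)" using idx_len[OF that(1)] that(2) by (intro nth_mem) simp
    then show ?thesis using idx_bound[OF that(1)] by blast
  qed
  have da: "distinct (map ((!) s) (idx S))" if "S \<subseteq> {..<n-1}" for S
  proof -
    have "distinct (idx S)" using idx_sorted[OF that] by (simp add: strict_sorted_iff)
    moreover have "inj_on ((!) s) (set (idx S))"
    proof (rule inj_onI)
      fix x y assume xy: "x \<in> set (idx S)" "y \<in> set (idx S)" "s ! x = s ! y"
      have "x < length s" "y < length s" using idx_bound[OF that] xy by auto
      then show "x = y" using nth_eq_iff_index_eq[OF ds, of x y] xy(3) by blast
    qed
    ultimately show ?thesis by (simp add: distinct_map)
  qed
  have sub: "\<Phi> ` Pow {..<n-1} \<subseteq> {\<pi> \<in> Sn n. \<pi> \<prec> s}"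
  proof
    fix \<pi> assume "\<pi> \<in> \<Phi> ` Pow {..<n-1}"
    then obtain S where S: "S \<subseteq> {..<n-1}" "\<pi> = \<Phi> S" by auto
    have "\<pi> \<in> Sn n" using std_Sn[OF da[OF S(1)]] idx_len[OF S(1)] S(2) unfolding \<Phi>_def by simp
    moreover have "\<pi> \<prec> s"
      using std_contained[OF ds idx_sorted[OF S(1)]] idx_bound[OF S(1)] S(2) unfolding \<Phi>_def by blast
    ultimately show "\<pi> \<in> {\<pi> \<in> Sn n. \<pi> \<prec> s}" by simp
  qed
  have key: "even (idx S ! j) \<longleftrightarrow> \<not> (s ! (idx S ! j) < s ! p0)" if "S \<subseteq> {..<n-1}" "j < n" for S j
  proof (cases "even (idx S ! j)")
    case True then show ?thesis using pmin[OF bnd[OF that]] by simp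
  next
    case False then show ?thesis using alt2[OF p0(1) bnd[OF that] p0(2)] by simp
  qed
  have inj: "inj_on \<Phi> (Pow {..<n-1})"
  proof (rule inj_onI)
    fix S S' assume "S \<in> Pow {..<n-1}" "S' \<in> Pow {..<n-1}" and eq: "\<Phi> S = \<Phi> S'"
    then have S1: "S \<subseteq> {..<n-1}" and S1': "S' \<subseteq> {..<n-1}" by auto
    define a where "a = map ((!) s) (idx S)"
    define b where "b = map ((!) s) (idx S')"
    have la: "length a = n" "length b = n" using idx_len S1 S1' unfolding a_def b_def by auto
    have ab: "std a = std b" using eq unfolding \<Phi>_def a_def b_def .
    show "S = S'"
    proof (rule par[OF S1 S1'], intro allI impI)
      fix j assume j: "j < n"
      have "(a ! j < a ! j0) = (std a ! j < std a ! j0)"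
        using std_less[of a j j0] da[OF S1] la j j0 unfolding a_def by simp
      also have "\<dots> = (std b ! j < std b ! j0)" using ab by simp
      also have "\<dots> = (b ! j < b ! j0)"
        using std_less[of b j j0] da[OF S1'] la j j0 unfolding b_def by simp
      finally have e: "(a ! j < a ! j0) = (b ! j < b ! j0)" .
      have "a ! j = s ! (idx S ! j)" "a ! j0 = s ! p0"
        using la j j0 idx_j0[OF S1] unfolding a_def by simp_all
      moreover have "b ! j = s ! (idx S' ! j)" "b ! j0 = s ! p0"
        using la j j0 idx_j0[OF S1'] unfolding b_def by simp_all
      ultimately show "even (idx S ! j) \<longleftrightarrow> even (idx S' ! j)"
        using key[OF S1 j] key[OF S1' j] e by simp
    qed
  qed
  have "card (Pow {..<n-1}) = 2 ^ (n - 1)" by (simp add: card_Pow)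
  then have "2 ^ (n - 1) = card (\<Phi> ` Pow {..<n-1})" using card_image[OF inj] by simp
  also have "\<dots> \<le> card {\<pi> \<in> Sn n. \<pi> \<prec> s}"
    by (rule card_mono[OF _ sub]) (rule finite_subset[OF _ finite_Sn], auto)
  finally show ?thesis .
qed


lemma patterns_after:
  assumes alt: "alternating s" and p0: "p0 < length s" "even p0"
    and pmin: "\<And>q. q < length s \<Longrightarrow> even q \<Longrightarrow> s ! p0 \<le> s ! q"
    and n: "1 \<le> n" and room: "p0 + 2 * (n - 1) < length s"
  shows "2 ^ (n - 1) \<le> card {\<pi> \<in> Sn n. \<pi> \<prec> s}"
proof (rule patterns_G[OF alt p0 pmin, of 0 n
    "\<lambda>S. map (\<lambda>j. if j = 0 then p0 else if j - 1 \<in> S then p0 + 2 * j else p0 + 2 * j - 1) [0..<n]"])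
  show "0 < n" using n by simp
next
  fix S :: "nat set" assume "S \<subseteq> {..<n-1}"
  show "length (map (\<lambda>j. if j = 0 then p0 else if j - 1 \<in> S then p0 + 2 * j else p0 + 2 * j - 1) [0..<n]) = n"
    by simp
next
  fix S :: "nat set" assume "S \<subseteq> {..<n-1}"
  show "sorted_wrt (<) (map (\<lambda>j. if j = 0 then p0 else if j - 1 \<in> S then p0 + 2 * j else p0 + 2 * j - 1) [0..<n])"
    unfolding sorted_wrt_iff_nth_less by auto
next
  fix S :: "nat set" and x assume "S \<subseteq> {..<n-1}"
    "x \<in> set (map (\<lambda>j. if j = 0 then p0 else if j - 1 \<in> S then p0 + 2 * j else p0 + 2 * j - 1) [0..<n])"
  then show "x < length s" using room by auto
next
  fix S :: "nat set" assume "S \<subseteq> {..<n-1}"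
  show "map (\<lambda>j. if j = 0 then p0 else if j - 1 \<in> S then p0 + 2 * j else p0 + 2 * j - 1) [0..<n] ! 0 = p0"
    using n by simp
next
  fix S S' :: "nat set" assume S: "S \<subseteq> {..<n-1}" and S': "S' \<subseteq> {..<n-1}"
    and e: "\<forall>j<n. even (map (\<lambda>j. if j = 0 then p0 else if j - 1 \<in> S then p0 + 2 * j else p0 + 2 * j - 1) [0..<n] ! j) =
                 even (map (\<lambda>j. if j = 0 then p0 else if j - 1 \<in> S' then p0 + 2 * j else p0 + 2 * j - 1) [0..<n] ! j)"
  have ev: "even (map (\<lambda>j. if j = 0 then p0 else if j - 1 \<in> T then p0 + 2 * j else p0 + 2 * j - 1) [0..<n] ! Suc x)
      \<longleftrightarrow> x \<in> T" if "x < n - 1" for x T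
  proof -
    have "map (\<lambda>j. if j = 0 then p0 else if j - 1 \<in> T then p0 + 2 * j else p0 + 2 * j - 1) [0..<n] ! Suc x
        = (if x \<in> T then p0 + 2 * Suc x else p0 + 2 * x + 1)" using that by simp
    then show ?thesis using p0(2) by simp
  qed
  show "S = S'"
  proof (rule set_eqI)
    fix x show "x \<in> S \<longleftrightarrow> x \<in> S'"
    proof (cases "x < n - 1")
      case True
      then have "Suc x < n" by simp
      then show ?thesis using e ev[OF True, of S] ev[OF True, of S'] by blast
    next
      case False then show ?thesis using S S' by auto
    qed
  qed
qed

lemma patterns_before:
  assumes alt: "alternating s" and p0: "p0 < length s" "even p0"
    and pmin: "\<And>q. q < length s \<Longrightarrow> even q \<Longrightarrow> s ! p0 \<le> s ! q"
    and n: "1 \<le> n" and room: "2 * (n - 1) \<le> p0"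
  shows "2 ^ (n - 1) \<le> card {\<pi> \<in> Sn n. \<pi> \<prec> s}"
proof (rule patterns_G[OF alt p0 pmin, of "n - 1" n
    "\<lambda>S. map (\<lambda>j. if j = n - 1 then p0 else if j \<in> S then p0 - 2 * (n - 1 - j) else p0 - 2 * (n - 1 - j) + 1) [0..<n]"])
  show "n - 1 < n" using n by simp
next
  fix S :: "nat set" assume "S \<subseteq> {..<n-1}"
  show "length (map (\<lambda>j. if j = n - 1 then p0 else if j \<in> S then p0 - 2 * (n - 1 - j) else p0 - 2 * (n - 1 - j) + 1) [0..<n]) = n"
    by simp
next
  fix S :: "nat set" assume "S \<subseteq> {..<n-1}"
  show "sorted_wrt (<) (map (\<lambda>j. if j = n - 1 then p0 else if j \<in> S then p0 - 2 * (n - 1 - j) else p0 - 2 * (n - 1 - j) + 1) [0..<n])"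
    unfolding sorted_wrt_iff_nth_less using room by auto
next
  fix S :: "nat set" and x assume "S \<subseteq> {..<n-1}"
    "x \<in> set (map (\<lambda>j. if j = n - 1 then p0 else if j \<in> S then p0 - 2 * (n - 1 - j) else p0 - 2 * (n - 1 - j) + 1) [0..<n])"
  then show "x < length s" using room p0(1) by auto
next
  fix S :: "nat set" assume "S \<subseteq> {..<n-1}"
  show "map (\<lambda>j. if j = n - 1 then p0 else if j \<in> S then p0 - 2 * (n - 1 - j) else p0 - 2 * (n - 1 - j) + 1) [0..<n] ! (n - 1) = p0"
    using n by simp
next
  fix S S' :: "nat set" assume S: "S \<subseteq> {..<n-1}" and S': "S' \<subseteq> {..<n-1}"
    and e: "\<forall>j<n. even (map (\<lambda>j. if j = n - 1 then p0 else if j \<in> S then p0 - 2 * (n - 1 - j) else p0 - 2 * (n - 1 - j) + 1) [0..<n] ! j) =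
                 even (map (\<lambda>j. if j = n - 1 then p0 else if j \<in> S' then p0 - 2 * (n - 1 - j) else p0 - 2 * (n - 1 - j) + 1) [0..<n] ! j)"
  have ev: "even (map (\<lambda>j. if j = n - 1 then p0 else if j \<in> T then p0 - 2 * (n - 1 - j) else p0 - 2 * (n - 1 - j) + 1) [0..<n] ! x)
      \<longleftrightarrow> x \<in> T" if "x < n - 1" for x T
  proof -
    have m: "map (\<lambda>j. if j = n - 1 then p0 else if j \<in> T then p0 - 2 * (n - 1 - j) else p0 - 2 * (n - 1 - j) + 1) [0..<n] ! x
        = (if x \<in> T then p0 - 2 * (n - 1 - x) else p0 - 2 * (n - 1 - x) + 1)" using that by simp
    have "2 * (n - 1 - x) \<le> p0" using room by simp
    then have "even (p0 - 2 * (n - 1 - x))" using p0(2) by simp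
    then show ?thesis unfolding m by simp
  qed
  show "S = S'"
  proof (rule set_eqI)
    fix x show "x \<in> S \<longleftrightarrow> x \<in> S'"
    proof (cases "x < n - 1")
      case True
      then have "x < n" by simp
      then show ?thesis using e ev[OF True, of S] ev[OF True, of S'] by blast
    next
      case False then show ?thesis using S S' by auto
    qed
  qed
qed


lemma alt_patterns:
  assumes alt: "alternating s" and L: "4 * n < length s" and n: "1 \<le> n"
  shows "2 ^ (n - 1) \<le> card {\<pi> \<in> Sn n. \<pi> \<prec> s}"
proof -
  define E where "E = {q. q < length s \<and> even q}"
  have finE: "finite ((!) s ` E)" unfolding E_def by simp
  have neE: "(!) s ` E \<noteq> {}" unfolding E_def using L by auto
  have "Min ((!) s ` E) \<in> (!) s ` E" using Min_in[OF finE neE] .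
  then obtain p0 where p0E: "p0 \<in> E" and p0v: "s ! p0 = Min ((!) s ` E)" by auto
  have p0: "p0 < length s" "even p0" using p0E unfolding E_def by auto
  have pmin: "s ! p0 \<le> s ! q" if "q < length s" "even q" for q
  proof -
    have "s ! q \<in> (!) s ` E" using that unfolding E_def by auto
    then show ?thesis unfolding p0v using Min_le[OF finE] by blast
  qed
  show ?thesis
  proof (cases "p0 + 2 * (n - 1) < length s")
    case True
    show ?thesis by (rule patterns_after[OF alt p0 pmin n True])
  next
    case False
    then have "2 * (n - 1) \<le> p0" using L by simp
    then show ?thesis using patterns_before[OF alt p0 pmin n] by blast
  qed
qed

theorem mainTheorem2:
  fixes X :: "nat list set" and n :: nat
  assumes "closed_class X" and "alX X = \<infinity>" and "n \<ge> 1"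
  shows "card (X \<inter> Sn n) \<ge> 2 ^ (n - 1)"
proof -
  have cX: "X \<subseteq> Sall" and down: "\<And>p r. r \<in> X \<Longrightarrow> p \<in> Sall \<Longrightarrow> p \<prec> r \<Longrightarrow> p \<in> X"
    using assms(1) unfolding closed_class_def by blast+
  have "enat (4 * n) < alX X" using assms(2) by simp
  then obtain p where pX: "p \<in> X" and "enat (4 * n) < al p"
    unfolding alX_def less_Sup_iff by auto
  then obtain s where s: "alternating s" "s \<prec> p \<or> s \<prec> perm_inv p" "enat (4 * n) < enat (length s)"
    unfolding al_def less_Sup_iff by auto
  then have L: "4 * n < length s" by simp
  have key: "2 ^ (n - 1) \<le> card {\<pi> \<in> Sn n. \<pi> \<prec> s}" by (rule alt_patterns[OF s(1) L assms(3)])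
  have fin: "finite (X \<inter> Sn n)" using finite_Sn by simp
  have pS: "p \<in> Sn (length p)" using pX cX Sall_iff by blast
  have SnSall: "\<pi> \<in> Sall" if "\<pi> \<in> Sn n" for \<pi> using that unfolding Sall_def by blast
  from s(2) show ?thesis
  proof
    assume sp: "s \<prec> p"
    have "{\<pi> \<in> Sn n. \<pi> \<prec> s} \<subseteq> X \<inter> Sn n"
    proof
      fix \<pi> assume "\<pi> \<in> {\<pi> \<in> Sn n. \<pi> \<prec> s}"
      then have a: "\<pi> \<in> Sn n" "\<pi> \<prec> s" by auto
      have "\<pi> \<prec> p" using contained_trans[OF a(2) sp] .
      then have "\<pi> \<in> X" using down[OF pX SnSall[OF a(1)]] by blast
      then show "\<pi> \<in> X \<inter> Sn n" using a(1) by blast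
    qed
    then have "card {\<pi> \<in> Sn n. \<pi> \<prec> s} \<le> card (X \<inter> Sn n)" by (rule card_mono[OF fin])
    then show ?thesis using key by linarith
  next
    assume sp: "s \<prec> perm_inv p"
    have "perm_inv ` {\<pi> \<in> Sn n. \<pi> \<prec> s} \<subseteq> X \<inter> Sn n"
    proof
      fix \<tau> assume "\<tau> \<in> perm_inv ` {\<pi> \<in> Sn n. \<pi> \<prec> s}"
      then obtain \<pi> where a: "\<pi> \<in> Sn n" "\<pi> \<prec> s" and t: "\<tau> = perm_inv \<pi>" by auto
      have "\<pi> \<prec> perm_inv p" using contained_trans[OF a(2) sp] .
      then have "perm_inv \<pi> \<prec> perm_inv (perm_inv p)"
        by (rule contained_inv[OF a(1) perm_inv_Sn[OF pS]])
      then have c: "\<tau> \<prec> p" using perm_inv_perm_inv[OF pS] t by simp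
      have tS: "\<tau> \<in> Sn n" using perm_inv_Sn[OF a(1)] t by simp
      have "\<tau> \<in> X" using down[OF pX SnSall[OF tS] c] .
      then show "\<tau> \<in> X \<inter> Sn n" using tS by blast
    qed
    then have "card (perm_inv ` {\<pi> \<in> Sn n. \<pi> \<prec> s}) \<le> card (X \<inter> Sn n)" by (rule card_mono[OF fin])
    moreover have "card (perm_inv ` {\<pi> \<in> Sn n. \<pi> \<prec> s}) = card {\<pi> \<in> Sn n. \<pi> \<prec> s}"
      by (rule card_image, rule inj_on_subset[OF perm_inv_inj]) auto
    ultimately show ?thesis using key by linarith
  qed
qed

end
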